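(* Let $(X,T)$ be a compact Hausdorff flow. Then $(X,T)$ satisfies the Furstenberg condition if and only if $(X,T)$ is equicontinuous. Moreover, if these equivalent conditions hold, then every point of $X$ is almost automorphic.
   Context: $X$ is a compact Hausdorff space and $T$ a topological group acting continuously on the left of $X$ (a compact Hausdorff flow). $\mathcal U$ denotes the unique uniform structure of $X$, i.e. the set of neighborhoods of the diagonal in $X\times X$ (entourages). The flow is equicontinuous if for every $\alpha\in\mathcal U$ there is $\beta\in\mathcal U$ such that $(x,y)\in\beta$ implies $(tx,ty)\in\alpha$ for all $t\in T$. The flow satisfies the Furstenberg condition if for every $\alpha\in\mathcal U$ there exists $\beta\in\mathcal U$ such that whenever $(tx,x)\in\beta$ and $(y,x)\in\beta$ for some $x,y\in X$, $t\in T$, we have $(ty,x)\in\alpha$. A point $x\in X$ is almost automorphic if for every net $\{t_i\}\subset T$ with $t_ix\to y$ for some $y\in X$ it holds that $t_i^{-1}y\to x$. *)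

theory Defs
  imports Complex_Main
begin

definition flow :: "('g::topological_group_add \<Rightarrow> 'a::topological_space \<Rightarrow> 'a) \<Rightarrow> bool" where
  "flow act \<longleftrightarrow>
     (\<forall>x. act 0 x = x) \<and>
     (\<forall>s t x. act (s + t) x = act s (act t x)) \<and>
     continuous_on UNIV (\<lambda>p. act (fst p) (snd p))"

text \<open>Entourages of the (unique) uniformity of a compact Hausdorff space:
  neighbourhoods of the diagonal in X \<times> X.\<close>
definition entourage :: "('a::topological_space \<times> 'a) set \<Rightarrow> bool" where
  "entourage \<alpha> \<longleftrightarrow> (\<exists>U. open U \<and> range (\<lambda>x. (x, x)) \<subseteq> U \<and> U \<subseteq> \<alpha>)"

definition flow_equicontinuous :: "('g::topological_group_add \<Rightarrow> 'a::topological_space \<Rightarrow> 'a) \<Rightarrow> bool" where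
  "flow_equicontinuous act \<longleftrightarrow>
     (\<forall>\<alpha>. entourage \<alpha> \<longrightarrow> (\<exists>\<beta>. entourage \<beta> \<and>
        (\<forall>x y. (x, y) \<in> \<beta> \<longrightarrow> (\<forall>t. (act t x, act t y) \<in> \<alpha>))))"

definition furstenberg_condition :: "('g::topological_group_add \<Rightarrow> 'a::topological_space \<Rightarrow> 'a) \<Rightarrow> bool" where
  "furstenberg_condition act \<longleftrightarrow>
     (\<forall>\<alpha>. entourage \<alpha> \<longrightarrow> (\<exists>\<beta>. entourage \<beta> \<and>
        (\<forall>x y t. (act t x, x) \<in> \<beta> \<and> (y, x) \<in> \<beta> \<longrightarrow> (act t y, x) \<in> \<alpha>)))"

text \<open>Nets in the group are represented by filters on
  the group (a net t_i corresponds to its image filter, and conversely every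
  filter is the image filter of a net), so "for every net t_i with t_i x \<rightarrow> y,
  t_i^{-1} y \<rightarrow> x" becomes the statement below.\<close>
definition almost_automorphic :: "('g::topological_group_add \<Rightarrow> 'a::topological_space \<Rightarrow> 'a) \<Rightarrow> 'a \<Rightarrow> bool" where
  "almost_automorphic act x \<longleftrightarrow>
     (\<forall>(F::'g filter) y. ((\<lambda>t. act t x) \<longlongrightarrow> y) F \<longrightarrow> ((\<lambda>t. act (- t) y) \<longlongrightarrow> x) F)"

end

theory Submission imports Defs "HOL-Analysis.Analysis" begin

lemma reg_sep:
  fixes N :: "'a::t2_space set"
  assumes cU: "compact (UNIV::'a set)" and oN: "open N" and pN: "p \<in> N"
  shows "\<exists>M. open M \<and> p \<in> M \<and> closure M \<subseteq> N"
proof -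
  have cK: "compact (-N)" using cU oN by (metis Compl_eq_Diff_UNIV Diff_eq compact_Int_closed closed_Compl inf_commute)
  have "\<forall>q. \<exists>UV. q \<in> -N \<longrightarrow> open (fst UV) \<and> open (snd UV) \<and> p \<in> fst UV \<and> q \<in> snd UV \<and> fst UV \<inter> snd UV = {}"
  proof
    fix q show "\<exists>UV. q \<in> -N \<longrightarrow> open (fst UV) \<and> open (snd UV) \<and> p \<in> fst UV \<and> q \<in> snd UV \<and> fst UV \<inter> snd UV = {}"
    proof (cases "q \<in> -N")
      case True then have "p \<noteq> q" using pN by auto
      then obtain U V where "open U" "open V" "p \<in> U" "q \<in> V" "U \<inter> V = {}" by (auto simp: separation_t2)
      then show ?thesis by (intro exI[of _ "(U,V)"]) auto
    qed auto
  qed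
  then obtain F where F: "\<And>q. q \<in> -N \<Longrightarrow> open (fst (F q)) \<and> open (snd (F q)) \<and> p \<in> fst (F q) \<and> q \<in> snd (F q) \<and> fst (F q) \<inter> snd (F q) = {}"
    by metis
  obtain T where T: "T \<subseteq> -N" "finite T" "-N \<subseteq> (\<Union>q\<in>T. snd (F q))"
    using compactE_image[OF cK, of "-N" "\<lambda>q. snd (F q)"] F by blast
  define M where "M = (\<Inter>q\<in>T. fst (F q))"
  have "open M" unfolding M_def using T F by (intro open_INT) auto
  moreover have "p \<in> M" unfolding M_def using T F by auto
  moreover have "closure M \<subseteq> N"
  proof -
    have "M \<subseteq> - (\<Union>q\<in>T. snd (F q))" unfolding M_def using T F by blast
    moreover have "closed (- (\<Union>q\<in>T. snd (F q)))" using T F by (intro closed_Compl open_UN) auto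
    ultimately have "closure M \<subseteq> - (\<Union>q\<in>T. snd (F q))" by (rule closure_minimal)
    then show ?thesis using T by blast
  qed
  ultimately show ?thesis by blast
qed

lemma box_nbhd:
  assumes "open (U::('a::topological_space \<times> 'a) set)" "(p,p) \<in> U"
  shows "\<exists>G. open G \<and> p \<in> G \<and> G \<times> G \<subseteq> U"
proof -
  obtain A B where "open A" "open B" "(p,p) \<in> A \<times> B" "A \<times> B \<subseteq> U"
    using open_prod_elim[OF assms] by blast
  then show ?thesis by (intro exI[of _ "A \<inter> B"]) auto
qed

lemma comp_ent:
  fixes U :: "('a::t2_space \<times> 'a) set"
  assumes cU: "compact (UNIV::'a set)" and oU: "open U" and dU: "range (\<lambda>x. (x,x)) \<subseteq> U"
  shows "\<exists>W. open W \<and> range (\<lambda>x. (x,x)) \<subseteq> W \<and> (\<forall>x y. (x,y) \<in> W \<longrightarrow> (y,x) \<in> W)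
             \<and> (\<forall>x y z. (x,y) \<in> W \<and> (y,z) \<in> W \<longrightarrow> (x,z) \<in> U)"
proof -
  have "\<forall>p. \<exists>NML. open (fst NML) \<and> open (fst (snd NML)) \<and> open (snd (snd NML)) \<and>
      p \<in> snd (snd NML) \<and> closure (snd (snd NML)) \<subseteq> fst (snd NML) \<and>
      closure (fst (snd NML)) \<subseteq> fst NML \<and> fst NML \<times> fst NML \<subseteq> U"
  proof
    fix p
    obtain N where N: "open N" "p \<in> N" "N \<times> N \<subseteq> U" using box_nbhd[OF oU] dU by blast
    obtain M where M: "open M" "p \<in> M" "closure M \<subseteq> N" using reg_sep[OF cU N(1,2)] by blast
    obtain L where L: "open L" "p \<in> L" "closure L \<subseteq> M" using reg_sep[OF cU M(1,2)] by blast
    show "\<exists>NML. open (fst NML) \<and> open (fst (snd NML)) \<and> open (snd (snd NML)) \<and>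
      p \<in> snd (snd NML) \<and> closure (snd (snd NML)) \<subseteq> fst (snd NML) \<and>
      closure (fst (snd NML)) \<subseteq> fst NML \<and> fst NML \<times> fst NML \<subseteq> U"
      using N M L by (intro exI[of _ "(N,M,L)"]) auto
  qed
  then obtain F where F: "\<And>p. open (fst (F p)) \<and> open (fst (snd (F p))) \<and> open (snd (snd (F p))) \<and>
      p \<in> snd (snd (F p)) \<and> closure (snd (snd (F p))) \<subseteq> fst (snd (F p)) \<and>
      closure (fst (snd (F p))) \<subseteq> fst (F p) \<and> fst (F p) \<times> fst (F p) \<subseteq> U"
    by metis
  define N where "N p = fst (F p)" for p
  define M where "M p = fst (snd (F p))" for p
  define L where "L p = snd (snd (F p))" for p
  have F': "\<And>p. open (N p) \<and> open (M p) \<and> open (L p) \<and> p \<in> L p \<and> closure (L p) \<subseteq> M p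
      \<and> closure (M p) \<subseteq> N p \<and> N p \<times> N p \<subseteq> U"
    using F unfolding N_def M_def L_def by blast
  have oL: "\<And>p. p \<in> UNIV \<Longrightarrow> open (L p)" using F' by blast
  have cov: "UNIV \<subseteq> (\<Union>p\<in>UNIV. L p)" using F' by blast
  obtain P where P0: "P \<subseteq> UNIV" and P: "finite P" "UNIV \<subseteq> (\<Union>p\<in>P. L p)"
    by (rule compactE_image[OF cU oL cov])
  define W where "W = (\<Inter>p\<in>P. ((N p \<times> N p) \<union> ((-closure (M p)) \<times> (-closure (M p)))) \<inter>
                                ((M p \<times> M p) \<union> ((-closure (L p)) \<times> (-closure (L p)))))"
  have "open W" unfolding W_def using P(1) F'
    by (intro open_INT ballI open_Int open_Un open_Times open_Compl closed_closure P(1)) (simp_all add: F')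
  moreover have "range (\<lambda>x. (x,x)) \<subseteq> W"
  proof -
    { fix x p
      have "x \<in> N p \<or> x \<notin> closure (M p)" using F'[of p] by blast
      moreover have "x \<in> M p \<or> x \<notin> closure (L p)" using F'[of p] by blast
      ultimately have "(x,x) \<in> ((N p \<times> N p) \<union> ((-closure (M p)) \<times> (-closure (M p)))) \<inter>
                                ((M p \<times> M p) \<union> ((-closure (L p)) \<times> (-closure (L p))))" by auto }
    then show ?thesis unfolding W_def by blast
  qed
  moreover have "\<forall>x y. (x,y) \<in> W \<longrightarrow> (y,x) \<in> W" unfolding W_def by blast
  moreover have "\<forall>x y z. (x,y) \<in> W \<and> (y,z) \<in> W \<longrightarrow> (x,z) \<in> U"
  proof (intro allI impI)
    fix x y z assume xyz: "(x,y) \<in> W \<and> (y,z) \<in> W"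
    obtain p where p: "p \<in> P" "x \<in> L p" using P by blast
    have W1: "(x,y) \<in> ((N p \<times> N p) \<union> ((-closure (M p)) \<times> (-closure (M p)))) \<inter>
                                ((M p \<times> M p) \<union> ((-closure (L p)) \<times> (-closure (L p))))"
      using xyz p(1) unfolding W_def by blast
    have W2: "(y,z) \<in> ((N p \<times> N p) \<union> ((-closure (M p)) \<times> (-closure (M p)))) \<inter>
                                ((M p \<times> M p) \<union> ((-closure (L p)) \<times> (-closure (L p))))"
      using xyz p(1) unfolding W_def by blast
    have xc: "x \<in> closure (L p)" using p(2) closure_subset by blast
    have "x \<in> M p" "y \<in> M p" using W1 xc by auto
    then have yc: "y \<in> closure (M p)" using closure_subset by blast
    have "x \<in> N p" using \<open>x \<in> M p\<close> F'[of p] closure_subset by blast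
    moreover have "z \<in> N p" using W2 yc by auto
    ultimately show "(x,z) \<in> U" using F'[of p] by blast
  qed
  ultimately show ?thesis by blast
qed

lemma act_cont:
  assumes "flow act" shows "continuous_on UNIV (act t)"
proof -
  have c: "continuous_on UNIV (\<lambda>p. act (fst p) (snd p))" using assms unfolding flow_def by blast
  have "continuous_on UNIV (\<lambda>y. (\<lambda>p. act (fst p) (snd p)) (t, y))"
    by (rule continuous_on_compose2[OF c]) (auto intro!: continuous_intros)
  then show ?thesis by simp
qed

lemma act_cancel:
  assumes "flow act" shows "act (s + - t) (act t y) = act s y"
proof -
  have "act (s + - t) (act t y) = act s (act (- t) (act t y))" using assms unfolding flow_def by metis
  also have "act (- t) (act t y) = act (- t + t) y" using assms unfolding flow_def by metis
  also have "\<dots> = y" using assms unfolding flow_def by simp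
  finally show ?thesis .
qed

lemma act_inv:
  assumes "flow act" shows "act (- t) (act t y) = y"
  using act_cancel[OF assms, of 0 t y] assms unfolding flow_def by simp

lemma equi_imp_furst:
  fixes act :: "'g::topological_group_add \<Rightarrow> 'a::t2_space \<Rightarrow> 'a"
  assumes cU: "compact (UNIV :: 'a set)" and eq: "flow_equicontinuous act"
  shows "furstenberg_condition act"
  unfolding furstenberg_condition_def
proof (intro allI impI)
  fix \<alpha> :: "('a \<times> 'a) set" assume "entourage \<alpha>"
  then obtain U where U: "open U" "range (\<lambda>x. (x,x)) \<subseteq> U" "U \<subseteq> \<alpha>" unfolding entourage_def by blast
  obtain W where W: "open W" "range (\<lambda>x. (x,x)) \<subseteq> W" "\<forall>x y z. (x,y) \<in> W \<and> (y,z) \<in> W \<longrightarrow> (x,z) \<in> U"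
    using comp_ent[OF cU U(1,2)] by blast
  have "entourage W" unfolding entourage_def using W by blast
  then obtain \<beta> where b: "entourage \<beta>" "\<forall>x y. (x, y) \<in> \<beta> \<longrightarrow> (\<forall>t. (act t x, act t y) \<in> W)"
    using eq unfolding flow_equicontinuous_def by blast
  then obtain V where V: "open V" "range (\<lambda>x. (x,x)) \<subseteq> V" "V \<subseteq> \<beta>" unfolding entourage_def by blast
  show "\<exists>\<beta>. entourage \<beta> \<and> (\<forall>x y t. (act t x, x) \<in> \<beta> \<and> (y, x) \<in> \<beta> \<longrightarrow> (act t y, x) \<in> \<alpha>)"
  proof (intro exI[of _ "V \<inter> W"] conjI allI impI)
    show "entourage (V \<inter> W)" unfolding entourage_def using V W
      by (intro exI[of _ "V \<inter> W"]) auto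
    fix x y t assume h: "(act t x, x) \<in> V \<inter> W \<and> (y, x) \<in> V \<inter> W"
    then have "(act t y, act t x) \<in> W" using b V by blast
    then have "(act t y, x) \<in> U" using h W(3) by blast
    then show "(act t y, x) \<in> \<alpha>" using U by blast
  qed
qed

lemma equi_imp_aa:
  fixes act :: "'g::topological_group_add \<Rightarrow> 'a::t2_space \<Rightarrow> 'a"
  assumes fl: "flow act" and eq: "flow_equicontinuous act"
  shows "almost_automorphic act x"
  unfolding almost_automorphic_def
proof (intro allI impI)
  fix F :: "'g filter" and y
  assume lim: "((\<lambda>t. act t x) \<longlongrightarrow> y) F"
  show "((\<lambda>t. act (- t) y) \<longlongrightarrow> x) F"
  proof (rule topological_tendstoI)
    fix S assume S: "open S" "x \<in> S"
    define U where "U = (S \<times> S) \<union> ((-{x}) \<times> (-{x}))"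
    have "entourage U" unfolding entourage_def U_def
      by (intro exI[of _ "(S \<times> S) \<union> ((-{x}) \<times> (-{x}))"]) (use S in \<open>auto intro!: open_Un open_Times open_Compl\<close>)
    then obtain \<beta> where b: "entourage \<beta>" "\<forall>a b. (a, b) \<in> \<beta> \<longrightarrow> (\<forall>t. (act t a, act t b) \<in> U)"
      using eq unfolding flow_equicontinuous_def by blast
    then obtain V where V: "open V" "range (\<lambda>x. (x,x)) \<subseteq> V" "V \<subseteq> \<beta>" unfolding entourage_def by blast
    have "open (Pair y -` V)"
      by (rule open_vimage[OF V(1)]) (auto intro!: continuous_intros)
    moreover have "y \<in> Pair y -` V" using V(2) by auto
    ultimately have ev: "eventually (\<lambda>t. act t x \<in> Pair y -` V) F"
      using topological_tendstoD[OF lim] by blast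
    show "eventually (\<lambda>t. act (- t) y \<in> S) F"
    proof (rule eventually_mono[OF ev])
      fix t assume "act t x \<in> Pair y -` V"
      then have "(y, act t x) \<in> \<beta>" using V by auto
      then have "(act (- t) y, act (- t) (act t x)) \<in> U" using b by blast
      then have "(act (- t) y, x) \<in> U" using act_inv[OF fl] by simp
      then show "act (- t) y \<in> S" unfolding U_def by auto
    qed
  qed
qed

lemma furst_pointwise:
  fixes act :: "'g::topological_group_add \<Rightarrow> 'a::t2_space \<Rightarrow> 'a"
  assumes cU: "compact (UNIV :: 'a set)" and fl: "flow act"
    and oB: "open B" and dB: "range (\<lambda>x. (x,x)) \<subseteq> B"
    and W': "\<forall>x y z. (x,y) \<in> W' \<and> (y,z) \<in> W' \<longrightarrow> (x,z) \<in> W"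
    and BW: "B \<subseteq> W'"
    and fB: "\<forall>x y t. (act t x, x) \<in> B \<and> (y,x) \<in> B \<longrightarrow> (act t y, x) \<in> W'"
  shows "\<exists>V. open V \<and> z \<in> V \<and> (\<forall>y\<in>V. \<forall>t. (act t y, act t z) \<in> W)"
proof (rule ccontr)
  assume nc: "\<not> ?thesis"
  have "\<forall>p. \<exists>G. open G \<and> p \<in> G \<and> G \<times> G \<subseteq> B" using box_nbhd[OF oB] dB by blast
  then obtain G where G: "\<And>p. open (G p) \<and> p \<in> G p \<and> G p \<times> G p \<subseteq> B" by metis
  have oG: "\<And>p. p \<in> UNIV \<Longrightarrow> open (G p)" using G by blast
  have cov: "UNIV \<subseteq> (\<Union>p\<in>UNIV. G p)" using G by blast
  obtain P where P0: "P \<subseteq> UNIV" and P: "finite P" "UNIV \<subseteq> (\<Union>p\<in>P. G p)"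
    by (rule compactE_image[OF cU oG cov])
  define bad where "bad p \<longleftrightarrow> (\<forall>V. open V \<and> z \<in> V \<longrightarrow>
      (\<exists>y\<in>V. \<exists>t. act t z \<in> G p \<and> (act t y, act t z) \<notin> W))" for p
  have "\<exists>p\<in>P. bad p"
  proof (rule ccontr)
    assume "\<not> (\<exists>p\<in>P. bad p)"
    then have "\<forall>p\<in>P. \<exists>V. open V \<and> z \<in> V \<and>
        \<not> (\<exists>y\<in>V. \<exists>t. act t z \<in> G p \<and> (act t y, act t z) \<notin> W)"
      unfolding bad_def by blast
    then obtain Vf where Vf: "\<And>p. p \<in> P \<Longrightarrow> open (Vf p) \<and> z \<in> Vf p \<and>
        \<not> (\<exists>y\<in>Vf p. \<exists>t. act t z \<in> G p \<and> (act t y, act t z) \<notin> W)"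
      by metis
    define V where "V = (\<Inter>p\<in>P. Vf p)"
    have "open V" unfolding V_def using P(1) Vf by (intro open_INT) auto
    moreover have "z \<in> V" unfolding V_def using Vf by auto
    ultimately obtain y t where yt: "y \<in> V" "(act t y, act t z) \<notin> W" using nc by blast
    obtain p where p: "p \<in> P" "act t z \<in> G p" using P by blast
    show False using Vf[OF p(1)] p(2) yt unfolding V_def using p(1) by blast
  qed
  then obtain p where p: "p \<in> P" "bad p" by blast
  obtain y0 tj where tj: "act tj z \<in> G p" using p(2) unfolding bad_def by blast
  define V' where "V' = (\<lambda>y. (act tj y, act tj z)) -` B"
  have "open V'" unfolding V'_def
    by (rule open_vimage[OF oB]) (auto intro!: continuous_intros act_cont[OF fl])
  moreover have "z \<in> V'" unfolding V'_def using dB by auto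
  ultimately obtain y ti where yti: "y \<in> V'" "act ti z \<in> G p" "(act ti y, act ti z) \<notin> W"
    using p(2) unfolding bad_def by blast
  define X where "X = act tj z"
  have e1: "act (ti + - tj) X = act ti z" unfolding X_def by (rule act_cancel[OF fl])
  have e2: "act (ti + - tj) (act tj y) = act ti y" by (rule act_cancel[OF fl])
  have GB: "G p \<times> G p \<subseteq> B" using G by blast
  have Bz: "(act ti z, act tj z) \<in> B" using tj yti(2) GB by blast
  have "(act (ti + - tj) X, X) \<in> B" using Bz e1 by (simp add: X_def)
  moreover have "(act tj y, X) \<in> B" using yti(1) unfolding V'_def X_def by simp
  ultimately have "(act (ti + - tj) (act tj y), X) \<in> W'" using fB by (metis (no_types))
  then have h1: "(act ti y, X) \<in> W'" using e2 by simp
  have "(X, act ti z) \<in> B" using tj yti(2) GB unfolding X_def by blast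
  then have "(X, act ti z) \<in> W'" using BW by blast
  then have "(act ti y, act ti z) \<in> W" using h1 W' by blast
  then show False using yti(3) by blast
qed

lemma furst_imp_equi:
  fixes act :: "'g::topological_group_add \<Rightarrow> 'a::t2_space \<Rightarrow> 'a"
  assumes cU: "compact (UNIV :: 'a set)" and fl: "flow act" and fu: "furstenberg_condition act"
  shows "flow_equicontinuous act"
  unfolding flow_equicontinuous_def
proof (intro allI impI)
  fix \<alpha> :: "('a \<times> 'a) set" assume "entourage \<alpha>"
  then obtain U where U: "open U" "range (\<lambda>x. (x,x)) \<subseteq> U" "U \<subseteq> \<alpha>" unfolding entourage_def by blast
  obtain W where W: "open W" "range (\<lambda>x. (x,x)) \<subseteq> W" "\<forall>x y. (x,y) \<in> W \<longrightarrow> (y,x) \<in> W"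
     "\<forall>x y z. (x,y) \<in> W \<and> (y,z) \<in> W \<longrightarrow> (x,z) \<in> U"
    using comp_ent[OF cU U(1,2)] by blast
  obtain W' where W': "open W'" "range (\<lambda>x. (x,x)) \<subseteq> W'"
     "\<forall>x y z. (x,y) \<in> W' \<and> (y,z) \<in> W' \<longrightarrow> (x,z) \<in> W"
    using comp_ent[OF cU W(1,2)] by blast
  have "entourage W'" unfolding entourage_def using W' by blast
  then obtain \<beta> where b: "entourage \<beta>" "\<forall>x y t. (act t x, x) \<in> \<beta> \<and> (y, x) \<in> \<beta> \<longrightarrow> (act t y, x) \<in> W'"
    using fu unfolding furstenberg_condition_def by blast
  then obtain V where V: "open V" "range (\<lambda>x. (x,x)) \<subseteq> V" "V \<subseteq> \<beta>" unfolding entourage_def by blast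
  have fB: "\<forall>x y t. (act t x, x) \<in> V \<inter> W' \<and> (y,x) \<in> V \<inter> W' \<longrightarrow> (act t y, x) \<in> W'"
    using b(2) V(3) by blast
  have "\<forall>z. \<exists>Q. open Q \<and> z \<in> Q \<and> (\<forall>y\<in>Q. \<forall>t. (act t y, act t z) \<in> W)"
  proof
    fix z show "\<exists>Q. open Q \<and> z \<in> Q \<and> (\<forall>y\<in>Q. \<forall>t. (act t y, act t z) \<in> W)"
      by (rule furst_pointwise[OF cU fl _ _ W'(3) _ fB]) (use V W' in auto)
  qed
  then obtain Q where Q: "\<And>z. open (Q z) \<and> z \<in> Q z \<and> (\<forall>y\<in>Q z. \<forall>t. (act t y, act t z) \<in> W)"
    by metis
  show "\<exists>\<beta>. entourage \<beta> \<and> (\<forall>x y. (x, y) \<in> \<beta> \<longrightarrow> (\<forall>t. (act t x, act t y) \<in> \<alpha>))"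
  proof (intro exI[of _ "\<Union>z. Q z \<times> Q z"] conjI allI impI)
    show "entourage (\<Union>z. Q z \<times> Q z)" unfolding entourage_def
    proof (intro exI[of _ "\<Union>z. Q z \<times> Q z"] conjI)
      show "open (\<Union>z. Q z \<times> Q z)" using Q by (intro open_UN ballI open_Times) auto
      show "range (\<lambda>x. (x, x)) \<subseteq> (\<Union>z. Q z \<times> Q z)" using Q by blast
    qed simp
    fix x y t assume "(x, y) \<in> (\<Union>z. Q z \<times> Q z)"
    then obtain z where "x \<in> Q z" "y \<in> Q z" by blast
    then have "(act t x, act t z) \<in> W" "(act t z, act t y) \<in> W" using Q W(3) by blast+
    then have "(act t x, act t y) \<in> U" using W(4) by blast
    then show "(act t x, act t y) \<in> \<alpha>" using U by blast
  qed
qed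

theorem mainTheorem1:
  fixes act :: "'g::topological_group_add \<Rightarrow> 'a::t2_space \<Rightarrow> 'a"
  assumes "compact (UNIV :: 'a set)"
    and "flow act"
  shows "(furstenberg_condition act \<longleftrightarrow> flow_equicontinuous act) \<and>
         (flow_equicontinuous act \<longrightarrow> (\<forall>x. almost_automorphic act x))"
  using equi_imp_furst[OF assms(1)] furst_imp_equi[OF assms] equi_imp_aa[OF assms(2)] by blast

end
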